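(* Let $H_0,H_1$ be complex Hilbert spaces, $G$ a densely defined closed operator from $H_0$ into $H_1$ and $D$ a densely defined closed operator from $H_1$ into $H_0$ with $-G^*\subset D$. Define $\Phi\colon\mathrm{BD}(D)\to\mathrm{BD}(G)'$ by $(\Phi(q))(u)=(Dq,u)_{H_0}+(q,Gu)_{H_1}$. Then $\Phi$ is unitary.
   Context: Put $\mathring D=-G^*$, $\mathring G=-D^*$. Domains carry graph inner products, e.g. $(u,v)_{\mathrm{dom}(G)}=(u,v)_{H_0}+(Gu,Gv)_{H_1}$. $\mathrm{BD}(G)$ is the orthogonal complement of $\mathrm{dom}(\mathring G)$ in $\mathrm{dom}(G)$ and $\mathrm{BD}(D)$ the orthogonal complement of $\mathrm{dom}(\mathring D)$ in $\mathrm{dom}(D)$, both with the induced inner products. $\mathrm{BD}(G)'$ denotes the Hilbert space of continuous antilinear functionals on $\mathrm{BD}(G)$ with the dual norm. *)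

theory Defs
  imports "HOL-Analysis.Analysis"
begin

definition cnorm :: "('a \<Rightarrow> 'a \<Rightarrow> complex) \<Rightarrow> 'a \<Rightarrow> real" where
  "cnorm ip x = sqrt (Re (ip x x))"

definition complex_inner_space ::
  "(complex \<Rightarrow> 'a::ab_group_add \<Rightarrow> 'a) \<Rightarrow> ('a \<Rightarrow> 'a \<Rightarrow> complex) \<Rightarrow> bool" where
  "complex_inner_space sc ip \<longleftrightarrow>
     vector_space sc \<and>
     (\<forall>x y z. ip (x + y) z = ip x z + ip y z) \<and>
     (\<forall>a x y. ip (sc a x) y = a * ip x y) \<and>
     (\<forall>x y. ip y x = cnj (ip x y)) \<and>
     (\<forall>x. 0 \<le> Re (ip x x)) \<and>
     (\<forall>x. ip x x = 0 \<longrightarrow> x = 0)"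

definition complex_hilbert_space ::
  "(complex \<Rightarrow> 'a::ab_group_add \<Rightarrow> 'a) \<Rightarrow> ('a \<Rightarrow> 'a \<Rightarrow> complex) \<Rightarrow> bool" where
  "complex_hilbert_space sc ip \<longleftrightarrow>
     complex_inner_space sc ip \<and>
     (\<forall>X::nat \<Rightarrow> 'a.
        (\<forall>e>0. \<exists>N. \<forall>m\<ge>N. \<forall>n\<ge>N. cnorm ip (X m - X n) < e) \<longrightarrow>
        (\<exists>L. (\<lambda>n. cnorm ip (X n - L)) \<longlonglongrightarrow> 0))"

definition densely_defined_op ::
  "(complex \<Rightarrow> 'a::ab_group_add \<Rightarrow> 'a) \<Rightarrow> ('a \<Rightarrow> 'a \<Rightarrow> complex) \<Rightarrow>
   (complex \<Rightarrow> 'b::ab_group_add \<Rightarrow> 'b) \<Rightarrow> 'a set \<Rightarrow> ('a \<Rightarrow> 'b) \<Rightarrow> bool" where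
  "densely_defined_op sc0 ip0 sc1 dm T \<longleftrightarrow>
     module.subspace sc0 dm \<and>
     (\<forall>x\<in>dm. \<forall>y\<in>dm. T (x + y) = T x + T y) \<and>
     (\<forall>a. \<forall>x\<in>dm. T (sc0 a x) = sc1 a (T x)) \<and>
     (\<forall>x. \<forall>e>0. \<exists>y\<in>dm. cnorm ip0 (x - y) < e)"

definition closed_op ::
  "('a::ab_group_add \<Rightarrow> 'a \<Rightarrow> complex) \<Rightarrow> ('b::ab_group_add \<Rightarrow> 'b \<Rightarrow> complex) \<Rightarrow>
   'a set \<Rightarrow> ('a \<Rightarrow> 'b) \<Rightarrow> bool" where
  "closed_op ip0 ip1 dm T \<longleftrightarrow>
     (\<forall>X x y. (\<forall>n. X n \<in> dm) \<and> (\<lambda>n. cnorm ip0 (X n - x)) \<longlonglongrightarrow> 0 \<and>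
              (\<lambda>n. cnorm ip1 (T (X n) - y)) \<longlonglongrightarrow> 0 \<longrightarrow> x \<in> dm \<and> T x = y)"

definition adj_dom ::
  "('a \<Rightarrow> 'a \<Rightarrow> complex) \<Rightarrow> ('b \<Rightarrow> 'b \<Rightarrow> complex) \<Rightarrow> 'a set \<Rightarrow> ('a \<Rightarrow> 'b) \<Rightarrow> 'b set" where
  "adj_dom ip0 ip1 dm T = {v. \<exists>w. \<forall>u\<in>dm. ip1 (T u) v = ip0 u w}"

definition adj ::
  "('a \<Rightarrow> 'a \<Rightarrow> complex) \<Rightarrow> ('b \<Rightarrow> 'b \<Rightarrow> complex) \<Rightarrow> 'a set \<Rightarrow> ('a \<Rightarrow> 'b) \<Rightarrow> 'b \<Rightarrow> 'a" where
  "adj ip0 ip1 dm T v = (THE w. \<forall>u\<in>dm. ip1 (T u) v = ip0 u w)"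

definition graph_norm ::
  "('a \<Rightarrow> 'a \<Rightarrow> complex) \<Rightarrow> ('b \<Rightarrow> 'b \<Rightarrow> complex) \<Rightarrow> ('a \<Rightarrow> 'b) \<Rightarrow> 'a \<Rightarrow> real" where
  "graph_norm ip0 ip1 T u = sqrt (Re (ip0 u u + ip1 (T u) (T u)))"

text \<open>BD: orthogonal complement of the subspace domo (the domain of the minimal operator)
inside dm(T), with respect to the graph inner product.\<close>

definition BD ::
  "('a \<Rightarrow> 'a \<Rightarrow> complex) \<Rightarrow> ('b \<Rightarrow> 'b \<Rightarrow> complex) \<Rightarrow> 'a set \<Rightarrow> ('a \<Rightarrow> 'b) \<Rightarrow> 'a set \<Rightarrow> 'a set" where
  "BD ip0 ip1 dm T domo = {u \<in> dm. \<forall>v\<in>domo. ip0 u v + ip1 (T u) (T v) = 0}"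

text \<open>Continuous antilinear functionals on a subspace S with norm N (the dual S'),
and the dual norm.  Functionals are represented by functions, only their values on S matter.\<close>

definition antidual ::
  "'a set \<Rightarrow> (complex \<Rightarrow> 'a::ab_group_add \<Rightarrow> 'a) \<Rightarrow> ('a \<Rightarrow> real) \<Rightarrow> ('a \<Rightarrow> complex) set" where
  "antidual S sc N = {f.
     (\<forall>u\<in>S. \<forall>v\<in>S. f (u + v) = f u + f v) \<and>
     (\<forall>a. \<forall>u\<in>S. f (sc a u) = cnj a * f u) \<and>
     (\<exists>C. \<forall>u\<in>S. cmod (f u) \<le> C * N u)}"

definition dual_norm :: "'a set \<Rightarrow> ('a \<Rightarrow> real) \<Rightarrow> ('a \<Rightarrow> complex) \<Rightarrow> real" where
  "dual_norm S N f = Sup {cmod (f u) | u. u \<in> S \<and> N u \<le> 1}"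

end

theory Submission
  imports Defs
begin


locale cips =
  fixes sc :: "complex \<Rightarrow> 'a::ab_group_add \<Rightarrow> 'a" and ip :: "'a \<Rightarrow> 'a \<Rightarrow> complex"
  assumes add_left: "ip (x + y) z = ip x z + ip y z"
    and sc_left: "ip (sc a x) y = a * ip x y"
    and herm: "ip y x = cnj (ip x y)"
    and pos: "0 \<le> Re (ip x x)"
    and pdef: "ip x x = 0 \<Longrightarrow> x = 0"
begin

lemma add_right: "ip x (y + z) = ip x y + ip x z"
  by (metis add_left herm complex_cnj_add)

lemma sc_right: "ip x (sc a y) = cnj a * ip x y"
  by (metis sc_left herm complex_cnj_mult)

lemma zero_left[simp]: "ip 0 y = 0"
  using add_left[of 0 0 y] by simp

lemma zero_right[simp]: "ip x 0 = 0"
  using add_right[of x 0 0] by simp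

lemma minus_left: "ip (- x) y = - ip x y"
  using add_left[of x "-x" y] by (simp add: eq_neg_iff_add_eq_0 add.commute)

lemma minus_right: "ip x (- y) = - ip x y"
  using add_right[of x y "-y"] by (simp add: eq_neg_iff_add_eq_0 add.commute)

lemma diff_left: "ip (x - y) z = ip x z - ip y z"
  using add_left[of x "-y" z] minus_left by simp

lemma diff_right: "ip x (y - z) = ip x y - ip x z"
  using add_right[of x y "-z"] minus_right by simp

lemma self_real: "ip x x = complex_of_real (Re (ip x x))"
  by (metis Reals_cnj_iff herm complex_is_Real_iff of_real_Re)

lemma self_eq0: "ip x x = 0 \<longleftrightarrow> x = 0"
  using pdef by auto

lemma ext_eq: assumes "\<And>z. ip x z = ip y z" shows "x = y"
proof -
  have "ip (x - y) (x - y) = 0" using assms diff_left by simp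
  then show ?thesis using pdef[of "x - y"] by simp
qed

lemma sc_add_r: "sc a (x + y) = sc a x + sc a y"
  by (rule ext_eq) (simp add: sc_left add_left distrib_left)

lemma sc_add_l: "sc (a + b) x = sc a x + sc b x"
  by (rule ext_eq) (simp add: sc_left add_left distrib_right)

lemma sc_mult: "sc a (sc b x) = sc (a * b) x"
  by (rule ext_eq) (simp add: sc_left)

lemma sc_one[simp]: "sc 1 x = x"
  by (rule ext_eq) (simp add: sc_left)

lemma sc_zero[simp]: "sc 0 x = 0"
  by (rule ext_eq) (simp add: sc_left)

lemma sc_zero_r[simp]: "sc a 0 = 0"
  by (rule ext_eq) (simp add: sc_left)

lemma sc_m1: "sc (-1) x = - x"
  by (rule ext_eq) (simp add: sc_left minus_left)

lemma sc_diff_r: "sc a (x - y) = sc a x - sc a y"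
  by (rule ext_eq) (simp add: sc_left diff_left right_diff_distrib)

definition Q where "Q x = Re (ip x x)"

lemma Q_nonneg: "0 \<le> Q x" unfolding Q_def using pos .

lemma ip_self: "ip x x = complex_of_real (Q x)"
  unfolding Q_def using self_real .

lemma cnorm_Q: "cnorm ip x = sqrt (Q x)"
  unfolding cnorm_def Q_def ..

lemma Q_sq: "Q x = (cnorm ip x)^2"
  using Q_nonneg[of x] by (simp add: cnorm_Q)

lemma cnorm_nonneg: "0 \<le> cnorm ip x" by (simp add: cnorm_Q Q_nonneg)

lemma Q_eq0: "Q x = 0 \<longleftrightarrow> x = 0"
  using ip_self self_eq0 by (metis of_real_0 of_real_eq_iff)

lemma Q_sc: "Q (sc a x) = (cmod a)^2 * Q x"
proof -
  have "ip (sc a x) (sc a x) = a * cnj a * ip x x" by (simp add: sc_left sc_right)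
  also have "a * cnj a = complex_of_real ((cmod a)^2)" by (simp add: complex_mult_cnj cmod_power2 del: of_real_power)
  finally show ?thesis unfolding Q_def by simp
qed

lemma cnorm_sc: "cnorm ip (sc a x) = cmod a * cnorm ip x"
  by (simp add: cnorm_Q Q_sc real_sqrt_mult)

lemma Q_expand_diff: "ip (x - y) (x - y) = ip x x - ip x y - cnj (ip x y) + ip y y"
  by (simp add: diff_left diff_right herm[of y x])

lemma Q_expand_add: "ip (x + y) (x + y) = ip x x + ip x y + cnj (ip x y) + ip y y"
  by (simp add: add_left add_right herm[of y x])

lemma Q_proj: assumes Qy: "Q y > 0"
  shows "Q (x - sc (ip x y / complex_of_real (Q y)) y) = Q x - (cmod (ip x y))^2 / Q y"
proof -
  define t where "t = ip x y / complex_of_real (Q y)"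
  have e1: "ip (x - sc t y) (x - sc t y) = ip x x - cnj t * ip x y - t * cnj (ip x y) + t * cnj t * ip y y"
    by (simp add: Q_expand_diff sc_left sc_right mult.assoc)
  have e2: "ip x x - cnj t * ip x y - t * cnj (ip x y) + t * cnj t * ip y y = ip x x - complex_of_real ((cmod (ip x y))^2 / Q y)"
  proof -
    define c where "c = ip x y"
    define q where "q = Q y"
    have q0: "complex_of_real q \<noteq> 0" using Qy q_def by simp
    have k: "c * cnj c = complex_of_real ((cmod c)^2)" using complex_norm_square[of c] by simp
    have t: "t = c / complex_of_real q" unfolding t_def c_def q_def ..
    have "cnj t * c = complex_of_real ((cmod c)^2 / q)"
      unfolding t using k by (simp add: mult.commute)
    moreover have "t * cnj c = complex_of_real ((cmod c)^2 / q)"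
      unfolding t using k by simp
    moreover have "t * cnj t * ip y y = complex_of_real ((cmod c)^2 / q)"
    proof -
      have "t * cnj t = complex_of_real ((cmod c)^2) / (complex_of_real q * complex_of_real q)"
        unfolding t using k by simp
      then have "t * cnj t * ip y y = complex_of_real ((cmod c)^2) / (complex_of_real q * complex_of_real q) * complex_of_real q"
        unfolding ip_self[of y] q_def by simp
      also have "... = complex_of_real ((cmod c)^2) / complex_of_real q"
        using q0 by (simp add: nonzero_divide_mult_cancel_right)
      finally show ?thesis by simp
    qed
    ultimately show ?thesis unfolding c_def q_def by simp
  qed
  have "Q (x - sc t y) = Q x - (cmod (ip x y))^2 / Q y"
    unfolding Q_def e1 e2 by simp
  then show ?thesis unfolding t_def .
qed

lemma CS: "cmod (ip x y) \<le> cnorm ip x * cnorm ip y"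
proof (cases "y = 0")
  case True then show ?thesis by (simp add: cnorm_Q Q_def)
next
  case False
  then have Qy: "Q y > 0" using Q_eq0 Q_nonneg by (metis less_eq_real_def)
  have "0 \<le> Q (x - sc (ip x y / complex_of_real (Q y)) y)" by (rule Q_nonneg)
  also have "... = Q x - (cmod (ip x y))^2 / Q y" by (rule Q_proj[OF Qy])
  finally have "(cmod (ip x y))^2 / Q y \<le> Q x" by simp
  then have "(cmod (ip x y))^2 \<le> Q x * Q y" using Qy by (simp add: field_simps)
  also have "... = (cnorm ip x * cnorm ip y)^2" by (simp add: Q_sq power_mult_distrib)
  finally show ?thesis
    using cnorm_nonneg by (meson mult_nonneg_nonneg power2_le_imp_le)
qed

lemma Re_le_cmod_ip: "Re (ip x y) \<le> cnorm ip x * cnorm ip y"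
  using CS complex_Re_le_cmod order_trans by blast

lemma triangle: "cnorm ip (x + y) \<le> cnorm ip x + cnorm ip y"
proof -
  have "Q (x + y) = Q x + Q y + 2 * Re (ip x y)"
    unfolding Q_def by (simp add: Q_expand_add)
  also have "... \<le> (cnorm ip x + cnorm ip y)^2"
    using Re_le_cmod_ip[of x y] by (simp add: Q_sq power2_sum)
  finally show ?thesis
    using cnorm_nonneg by (metis Q_sq add_nonneg_nonneg power2_le_imp_le)
qed

lemma cnorm_commute: "cnorm ip (x - y) = cnorm ip (y - x)"
  using cnorm_sc[of "-1" "x - y"] sc_m1 by simp

lemma cnorm_diff_tri: "cnorm ip (x - z) \<le> cnorm ip (x - y) + cnorm ip (y - z)"
  using triangle[of "x - y" "y - z"] by simp

lemma ip_cont: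
  assumes "(\<lambda>n. cnorm ip (X n - x)) \<longlonglongrightarrow> 0"
  shows "(\<lambda>n. ip (X n) y) \<longlonglongrightarrow> ip x y"
proof -
  have "(\<lambda>n. cnorm ip (X n - x) * cnorm ip y) \<longlonglongrightarrow> 0"
    using tendsto_mult_left_zero[OF assms] by simp
  moreover have "norm (ip (X n) y - ip x y) \<le> cnorm ip (X n - x) * cnorm ip y" for n
    using CS[of "X n - x" y] by (simp add: diff_left)
  ultimately have "(\<lambda>n. ip (X n) y - ip x y) \<longlonglongrightarrow> 0"
    using Lim_null_comparison[OF always_eventually, of "\<lambda>n. ip (X n) y - ip x y" "\<lambda>n. cnorm ip (X n - x) * cnorm ip y"] by blast
  then show ?thesis by (simp add: LIM_zero_iff)
qed

definition csub where
  "csub N \<longleftrightarrow> N \<noteq> {} \<and> (\<forall>a\<in>N. \<forall>b\<in>N. a + b \<in> N) \<and> (\<forall>c. \<forall>a\<in>N. sc c a \<in> N)"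

definition cmpl where
  "cmpl N \<longleftrightarrow> (\<forall>X. (\<forall>n. X n \<in> N) \<and> (\<forall>e>0. \<exists>M. \<forall>m\<ge>M. \<forall>n\<ge>M. cnorm ip (X m - X n) < e)
      \<longrightarrow> (\<exists>L\<in>N. (\<lambda>n. cnorm ip (X n - L)) \<longlonglongrightarrow> 0))"

lemma csub_zero: "csub N \<Longrightarrow> 0 \<in> N"
  unfolding csub_def by (metis all_not_in_conv sc_zero)

lemma csub_diff: "csub N \<Longrightarrow> a \<in> N \<Longrightarrow> b \<in> N \<Longrightarrow> a - b \<in> N"
  unfolding csub_def by (metis sc_m1 diff_conv_add_uminus)

lemma parallelogram:
  "Q (a - b) = 2 * Q (x - a) + 2 * Q (x - b) - 4 * Q (x - sc (1/2) (a + b))"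
proof -
  have h: "x - sc (1/2) (a + b) = sc (1/2) ((x - a) + (x - b))"
    by (rule ext_eq) (simp add: sc_left add_left diff_left field_simps)
  have A: "Q (sc (1/2) ((x - a) + (x - b))) = 1/4 * Q ((x - a) + (x - b))"
    by (simp add: Q_sc power2_eq_square)
  have B: "a - b = (x - b) - (x - a)" by simp
  have C: "Q ((x - b) - (x - a)) + Q ((x - a) + (x - b)) = 2 * Q (x - a) + 2 * Q (x - b)"
    unfolding Q_def Q_expand_diff Q_expand_add by (simp add: herm[of "x - a" "x - b"])
  have D: "Q (a - b) = Q ((x - b) - (x - a))" using B by simp
  have E: "Q (x - sc (1/2) (a + b)) = Q (sc (1/2) ((x - a) + (x - b)))" using h by simp
  show ?thesis using A C D E by linarith
qed

lemma projection:
  assumes sub: "csub N" and cm: "cmpl N"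
  shows "\<exists>m\<in>N. \<forall>n\<in>N. ip n (x - m) = 0"
proof -
  define Dset where "Dset = (\<lambda>n. Q (x - n)) ` N"
  define d where "d = Inf Dset"
  have ne: "Dset \<noteq> {}" using sub unfolding csub_def Dset_def by auto
  have bdd: "bdd_below Dset" unfolding Dset_def using Q_nonneg by (intro bdd_belowI[of _ 0]) auto
  have dle: "d \<le> Q (x - n)" if "n \<in> N" for n
    unfolding d_def Dset_def using bdd that by (intro cInf_lower) (auto simp: Dset_def)
  have "\<exists>n\<in>N. Q (x - n) < d + inverse (real (Suc k))" for k
  proof -
    have "d < d + inverse (real (Suc k))" by simp
    then obtain y where "y \<in> Dset" "y < d + inverse (real (Suc k))"
      using cInf_lessD[OF ne] unfolding d_def by blast
    then show ?thesis unfolding Dset_def by auto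
  qed
  then obtain X where X: "\<And>k. X k \<in> N" "\<And>k. Q (x - X k) < d + inverse (real (Suc k))"
    by metis
  have half: "sc (1/2) (X i + X j) \<in> N" for i j
    using sub X(1) unfolding csub_def by blast
  have Qb: "Q (X i - X j) \<le> 2 * inverse (real (Suc i)) + 2 * inverse (real (Suc j))" for i j
    using parallelogram[of "X i" "X j" x] X(2)[of i] X(2)[of j] dle[OF half[of i j]] by linarith
  have cauchy: "\<forall>e>0. \<exists>M. \<forall>m\<ge>M. \<forall>n\<ge>M. cnorm ip (X m - X n) < e"
  proof (intro allI impI)
    fix e :: real assume e: "e > 0"
    then have "e^2 / 4 > 0" by simp
    then obtain M where M: "inverse (real (Suc M)) < e^2 / 4"
      using reals_Archimedean by blast
    show "\<exists>M. \<forall>m\<ge>M. \<forall>n\<ge>M. cnorm ip (X m - X n) < e"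
    proof (intro exI allI impI)
      fix m n assume mn: "M \<le> m" "M \<le> n"
      have "inverse (real (Suc m)) \<le> inverse (real (Suc M))" "inverse (real (Suc n)) \<le> inverse (real (Suc M))"
        using mn by (auto simp: field_simps)
      then have "Q (X m - X n) < e^2" using Qb[of m n] M by linarith
      then have sq: "(cnorm ip (X m - X n))^2 < e^2" by (simp add: Q_sq)
      show "cnorm ip (X m - X n) < e"
        by (rule power2_less_imp_less[OF sq less_imp_le[OF e]])
    qed
  qed
  obtain m where m: "m \<in> N" "(\<lambda>n. cnorm ip (X n - m)) \<longlonglongrightarrow> 0"
    using cm X(1) cauchy unfolding cmpl_def by blast
  have le1: "cnorm ip (x - m) \<le> sqrt (d + inverse (real (Suc k))) + cnorm ip (X k - m)" for k
  proof -
    have "cnorm ip (x - m) \<le> cnorm ip (x - X k) + cnorm ip (X k - m)" by (rule cnorm_diff_tri)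
    moreover have "cnorm ip (x - X k) \<le> sqrt (d + inverse (real (Suc k)))"
      using X(2)[of k] by (simp add: cnorm_Q)
    ultimately show ?thesis by linarith
  qed
  have lim: "(\<lambda>k. sqrt (d + inverse (real (Suc k))) + cnorm ip (X k - m)) \<longlonglongrightarrow> sqrt (d + 0) + 0"
    by (intro tendsto_intros LIMSEQ_inverse_real_of_nat m(2))
  have "cnorm ip (x - m) \<le> sqrt d"
    using lim le1 by (intro LIMSEQ_le_const[of _ "sqrt d"]) (auto simp: LIMSEQ_le_const)
  then have "Q (x - m) \<le> d"
    using cnorm_nonneg by (metis Q_sq dle m(1) real_sqrt_le_iff cnorm_Q)
  then have minm: "Q (x - m) \<le> Q (x - n)" if "n \<in> N" for n using dle[OF that] by linarith
  have "ip n (x - m) = 0" if n: "n \<in> N" for n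
  proof (cases "n = 0")
    case True then show ?thesis by simp
  next
    case False
    then have Qn: "Q n > 0" using Q_eq0 Q_nonneg by (metis less_eq_real_def)
    define t where "t = ip (x - m) n / complex_of_real (Q n)"
    have "m + sc t n \<in> N" using sub m(1) n unfolding csub_def by blast
    from minm[OF this] have "Q (x - m) \<le> Q ((x - m) - sc t n)"
      by (simp add: diff_diff_eq)
    also have "... = Q (x - m) - (cmod (ip (x - m) n))^2 / Q n"
      unfolding t_def by (rule Q_proj[OF Qn])
    finally have "(cmod (ip (x - m) n))^2 / Q n \<le> 0" by simp
    then have "(cmod (ip (x - m) n))^2 \<le> 0" using Qn by (simp add: divide_le_0_iff)
    then have "ip (x - m) n = 0" by simp
    then show ?thesis by (metis herm complex_cnj_zero)
  qed
  then show ?thesis using m(1) by blast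
qed

lemma riesz:
  assumes sub: "csub M" and cm: "cmpl M"
    and Fadd: "\<forall>u\<in>M. \<forall>v\<in>M. F (u + v) = F u + F v"
    and Fsc: "\<forall>a. \<forall>u\<in>M. F (sc a u) = cnj a * F u"
    and Fb: "\<forall>u\<in>M. cmod (F u) \<le> C * cnorm ip u"
  shows "\<exists>w\<in>M. \<forall>u\<in>M. F u = ip w u"
proof (cases "\<forall>u\<in>M. F u = 0")
  case True then show ?thesis using csub_zero[OF sub] by force
next
  case False
  then obtain x where x: "x \<in> M" "F x \<noteq> 0" by blast
  have z0: "0 \<in> M" by (rule csub_zero[OF sub])
  have F0: "F 0 = 0" using Fadd z0 by (metis add.right_neutral add_cancel_right_right)
  have Fdiff: "F (u - v) = F u - F v" if "u \<in> M" "v \<in> M" for u v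
  proof -
    have "u - v \<in> M" using csub_diff[OF sub] that by blast
    then have "F u = F (u - v) + F v" using Fadd that by (metis diff_add_cancel)
    then show ?thesis by simp
  qed
  define N where "N = {u\<in>M. F u = 0}"
  have subN: "csub N" unfolding csub_def N_def
  proof (intro conjI ballI allI)
    show "{u \<in> M. F u = 0} \<noteq> {}" using z0 F0 by blast
  next
    fix a b assume "a \<in> {u \<in> M. F u = 0}" "b \<in> {u \<in> M. F u = 0}"
    then show "a + b \<in> {u \<in> M. F u = 0}" using sub Fadd unfolding csub_def by auto
  next
    fix c a assume "a \<in> {u \<in> M. F u = 0}"
    then show "sc c a \<in> {u \<in> M. F u = 0}" using sub Fsc unfolding csub_def by auto
  qed
  have cmN: "cmpl N" unfolding cmpl_def
  proof (intro allI impI)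
    fix X :: "nat \<Rightarrow> 'a" assume H: "(\<forall>n. X n \<in> N) \<and> (\<forall>e>0. \<exists>M. \<forall>m\<ge>M. \<forall>n\<ge>M. cnorm ip (X m - X n) < e)"
    then have XM: "\<forall>n. X n \<in> M" unfolding N_def by auto
    then obtain L where L: "L \<in> M" "(\<lambda>n. cnorm ip (X n - L)) \<longlonglongrightarrow> 0"
      using cm H unfolding cmpl_def by blast
    have le: "cmod (F L) \<le> C * cnorm ip (X n - L)" for n
    proof -
      have "F (L - X n) = F L" using Fdiff[OF L(1) XM[rule_format, of n]] H unfolding N_def by auto
      moreover have "L - X n \<in> M" using csub_diff[OF sub L(1) XM[rule_format, of n]] .
      ultimately show ?thesis using Fb cnorm_commute by metis
    qed
    have "(\<lambda>n. C * cnorm ip (X n - L)) \<longlonglongrightarrow> C * 0" by (intro tendsto_intros L(2))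
    then have "cmod (F L) \<le> 0" using le by (intro LIMSEQ_le_const[of _ 0]) auto
    then have "L \<in> N" unfolding N_def using L(1) by simp
    then show "\<exists>L\<in>N. (\<lambda>n. cnorm ip (X n - L)) \<longlonglongrightarrow> 0" using L(2) by blast
  qed
  obtain m where m: "m \<in> N" "\<forall>n\<in>N. ip n (x - m) = 0"
    using projection[OF subN cmN] by blast
  define z where "z = x - m"
  have zM: "z \<in> M" unfolding z_def using csub_diff[OF sub x(1)] m(1) N_def by auto
  have Fz: "F z = F x" unfolding z_def using Fdiff[OF x(1)] m(1) N_def by auto
  then have "z \<noteq> 0" using x(2) F0 by auto
  then have zz: "ip z z \<noteq> 0" using pdef by blast
  have rep: "F u = ip (sc (F z / ip z z) z) u" if u: "u \<in> M" for u
  proof -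
    define u' where "u' = sc (cnj (F u)) z - sc (cnj (F z)) u"
    have a1: "sc (cnj (F u)) z \<in> M" "sc (cnj (F z)) u \<in> M" using sub zM u unfolding csub_def by auto
    have "u' \<in> M" unfolding u'_def using csub_diff[OF sub a1] .
    moreover have "F u' = 0" unfolding u'_def using Fdiff[OF a1] Fsc zM u by simp
    ultimately have "u' \<in> N" unfolding N_def by simp
    then have "ip u' z = 0" using m(2) z_def by simp
    then have "cnj (F u) * ip z z - cnj (F z) * ip u z = 0" unfolding u'_def by (simp add: diff_left sc_left)
    then have "cnj (cnj (F u) * ip z z - cnj (F z) * ip u z) = 0" by simp
    then have "F u * ip z z = F z * ip z u" using herm[of z z] herm[of z u] by simp
    then show ?thesis using zz by (simp add: sc_left field_simps)
  qed
  have "sc (F z / ip z z) z \<in> M" using sub zM unfolding csub_def by auto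
  then show ?thesis using rep by blast
qed

end


definition psc :: "(complex \<Rightarrow> 'a \<Rightarrow> 'a) \<Rightarrow> (complex \<Rightarrow> 'b \<Rightarrow> 'b) \<Rightarrow> complex \<Rightarrow> 'a \<times> 'b \<Rightarrow> 'a \<times> 'b" where
  "psc sc0 sc1 = (\<lambda>c p. (sc0 c (fst p), sc1 c (snd p)))"

definition pip :: "('a \<Rightarrow> 'a \<Rightarrow> complex) \<Rightarrow> ('b \<Rightarrow> 'b \<Rightarrow> complex) \<Rightarrow> 'a \<times> 'b \<Rightarrow> 'a \<times> 'b \<Rightarrow> complex" where
  "pip ip0 ip1 = (\<lambda>p q. ip0 (fst p) (fst q) + ip1 (snd p) (snd q))"

lemma hilbert_cips: "complex_hilbert_space sc ip \<Longrightarrow> cips sc ip"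
proof -
  assume "complex_hilbert_space sc ip"
  then have c: "complex_inner_space sc ip" unfolding complex_hilbert_space_def by (rule conjunct1)
  note c' = c[unfolded complex_inner_space_def]
  note c1 = c'[THEN conjunct2, THEN conjunct1]
  note c2 = c'[THEN conjunct2, THEN conjunct2, THEN conjunct1]
  note c3 = c'[THEN conjunct2, THEN conjunct2, THEN conjunct2, THEN conjunct1]
  note c4 = c'[THEN conjunct2, THEN conjunct2, THEN conjunct2, THEN conjunct2, THEN conjunct1]
  note c5 = c'[THEN conjunct2, THEN conjunct2, THEN conjunct2, THEN conjunct2, THEN conjunct2]
  show "cips sc ip"
  proof
    fix x y z a
    show "ip (x + y) z = ip x z + ip y z" by (rule c1[rule_format])
    show "ip (sc a x) y = a * ip x y" by (rule c2[rule_format])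
    show "ip y x = cnj (ip x y)" by (rule c3[rule_format])
    show "0 \<le> Re (ip x x)" by (rule c4[rule_format])
    show "ip x x = 0 \<Longrightarrow> x = 0" by (rule c5[rule_format])
  qed
qed

lemma hilbert_cauchy:
  fixes X :: "nat \<Rightarrow> 'a::ab_group_add"
  assumes "complex_hilbert_space sc ip" "\<forall>e>0. \<exists>M. \<forall>m\<ge>M. \<forall>n\<ge>M. cnorm ip (X m - X n) < e"
  shows "\<exists>L. (\<lambda>n. cnorm ip (X n - L)) \<longlonglongrightarrow> 0"
proof -
  have h: "\<forall>X::nat \<Rightarrow> 'a. (\<forall>e>0. \<exists>N. \<forall>m\<ge>N. \<forall>n\<ge>N. cnorm ip (X m - X n) < e) \<longrightarrow>
        (\<exists>L. (\<lambda>n. cnorm ip (X n - L)) \<longlonglongrightarrow> 0)"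
    using assms(1) unfolding complex_hilbert_space_def by (rule conjunct2)
  from spec[OF h, of X] assms(2) show ?thesis by (rule mp)
qed

lemma prod_cips:
  assumes "cips sc0 ip0" "cips sc1 ip1"
  shows "cips (psc sc0 sc1) (pip ip0 ip1)"
proof -
  interpret A: cips sc0 ip0 by fact
  interpret B: cips sc1 ip1 by fact
  show ?thesis
  proof
    fix x y z :: "'a \<times> 'b" and a
    show "pip ip0 ip1 (x + y) z = pip ip0 ip1 x z + pip ip0 ip1 y z"
      unfolding pip_def by (simp add: A.add_left B.add_left)
    show "pip ip0 ip1 (psc sc0 sc1 a x) y = a * pip ip0 ip1 x y"
      unfolding pip_def psc_def by (simp add: A.sc_left B.sc_left distrib_left)
    show "pip ip0 ip1 y x = cnj (pip ip0 ip1 x y)"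
      unfolding pip_def by (simp add: A.herm[of "fst x" "fst y"] B.herm[of "snd x" "snd y"])
    show "0 \<le> Re (pip ip0 ip1 x x)"
      unfolding pip_def using A.pos B.pos by (simp add: add_nonneg_nonneg)
  next
    fix x :: "'a \<times> 'b"
    assume h: "pip ip0 ip1 x x = 0"
    have "Re (ip0 (fst x) (fst x)) + Re (ip1 (snd x) (snd x)) = 0"
    proof -
      have "Re (pip ip0 ip1 x x) = 0" using h by simp
      then show ?thesis by (simp add: pip_def)
    qed
    then have "Re (ip0 (fst x) (fst x)) = 0" "Re (ip1 (snd x) (snd x)) = 0"
      using A.pos[of "fst x"] B.pos[of "snd x"] by linarith+
    then have "fst x = 0" "snd x = 0"
      using A.Q_eq0 B.Q_eq0 unfolding A.Q_def B.Q_def by auto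
    then show "x = 0" by (simp add: prod_eq_iff)
  qed
qed

lemma pnorm: "cnorm (pip ip0 ip1) p = sqrt (Re (ip0 (fst p) (fst p)) + Re (ip1 (snd p) (snd p)))"
  unfolding cnorm_def pip_def by simp

lemma pnorm_fst:
  assumes "cips sc1 ip1" shows "cnorm ip0 (fst p) \<le> cnorm (pip ip0 ip1) p"
  using cips.pos[OF assms] by (simp add: cnorm_def pip_def)

lemma pnorm_snd:
  assumes "cips sc0 ip0" shows "cnorm ip1 (snd p) \<le> cnorm (pip ip0 ip1) p"
  using cips.pos[OF assms] by (simp add: cnorm_def pip_def)

lemma pnorm_le:
  assumes "cips sc0 ip0" "cips sc1 ip1"
  shows "cnorm (pip ip0 ip1) p \<le> cnorm ip0 (fst p) + cnorm ip1 (snd p)"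
  using cips.pos[OF assms(1)] cips.pos[OF assms(2)]
  by (simp add: cnorm_def pip_def sqrt_add_le_add_sqrt)

lemma prod_complete:
  assumes H0: "complex_hilbert_space sc0 ip0" and H1: "complex_hilbert_space sc1 ip1"
    and X: "\<forall>e>0. \<exists>M. \<forall>m\<ge>M. \<forall>n\<ge>M. cnorm (pip ip0 ip1) (X m - X n) < e"
  shows "\<exists>L. (\<lambda>n. cnorm (pip ip0 ip1) (X n - L)) \<longlonglongrightarrow> 0"
proof -
  have c0: "cips sc0 ip0" and c1: "cips sc1 ip1" using H0 H1 by (auto intro: hilbert_cips)
  have "\<forall>e>0. \<exists>M. \<forall>m\<ge>M. \<forall>n\<ge>M. cnorm ip0 (fst (X m) - fst (X n)) < e"
  proof (intro allI impI)
    fix e :: real assume "e > 0"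
    then obtain M where M: "\<forall>m\<ge>M. \<forall>n\<ge>M. cnorm (pip ip0 ip1) (X m - X n) < e" using X by blast
    show "\<exists>M. \<forall>m\<ge>M. \<forall>n\<ge>M. cnorm ip0 (fst (X m) - fst (X n)) < e"
    proof (intro exI allI impI)
      fix m n assume mn: "M \<le> m" "M \<le> n"
      have "cnorm ip0 (fst (X m - X n)) \<le> cnorm (pip ip0 ip1) (X m - X n)" by (rule pnorm_fst[OF c1])
      moreover have "cnorm (pip ip0 ip1) (X m - X n) < e" using M mn by blast
      ultimately show "cnorm ip0 (fst (X m) - fst (X n)) < e" by simp
    qed
  qed
  then have "\<exists>L. (\<lambda>n. cnorm ip0 (fst (X n) - L)) \<longlonglongrightarrow> 0"
    by (rule hilbert_cauchy[OF H0])
  then obtain L0 where L0: "(\<lambda>n. cnorm ip0 (fst (X n) - L0)) \<longlonglongrightarrow> 0" by blast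
  have "\<forall>e>0. \<exists>M. \<forall>m\<ge>M. \<forall>n\<ge>M. cnorm ip1 (snd (X m) - snd (X n)) < e"
  proof (intro allI impI)
    fix e :: real assume "e > 0"
    then obtain M where M: "\<forall>m\<ge>M. \<forall>n\<ge>M. cnorm (pip ip0 ip1) (X m - X n) < e" using X by blast
    show "\<exists>M. \<forall>m\<ge>M. \<forall>n\<ge>M. cnorm ip1 (snd (X m) - snd (X n)) < e"
    proof (intro exI allI impI)
      fix m n assume mn: "M \<le> m" "M \<le> n"
      have "cnorm ip1 (snd (X m - X n)) \<le> cnorm (pip ip0 ip1) (X m - X n)" by (rule pnorm_snd[OF c0])
      moreover have "cnorm (pip ip0 ip1) (X m - X n) < e" using M mn by blast
      ultimately show "cnorm ip1 (snd (X m) - snd (X n)) < e" by simp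
    qed
  qed
  then have "\<exists>L. (\<lambda>n. cnorm ip1 (snd (X n) - L)) \<longlonglongrightarrow> 0"
    by (rule hilbert_cauchy[OF H1])
  then obtain L1 where L1: "(\<lambda>n. cnorm ip1 (snd (X n) - L1)) \<longlonglongrightarrow> 0" by blast
  have le: "norm (cnorm (pip ip0 ip1) (X n - (L0, L1))) \<le> cnorm ip0 (fst (X n) - L0) + cnorm ip1 (snd (X n) - L1)" for n
  proof -
    have "norm (cnorm (pip ip0 ip1) (X n - (L0, L1))) = cnorm (pip ip0 ip1) (X n - (L0, L1))"
      using cips.cnorm_nonneg[OF prod_cips[OF c0 c1]] by simp
    also have "... \<le> cnorm ip0 (fst (X n - (L0, L1))) + cnorm ip1 (snd (X n - (L0, L1)))"
      by (rule pnorm_le[OF c0 c1])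
    finally show ?thesis by simp
  qed
  have "(\<lambda>n. cnorm ip0 (fst (X n) - L0) + cnorm ip1 (snd (X n) - L1)) \<longlonglongrightarrow> 0 + 0"
    by (intro tendsto_add L0 L1)
  then have "(\<lambda>n. cnorm (pip ip0 ip1) (X n - (L0, L1))) \<longlonglongrightarrow> 0"
    using Lim_null_comparison[OF always_eventually[of "\<lambda>n. norm (cnorm (pip ip0 ip1) (X n - (L0, L1))) \<le> cnorm ip0 (fst (X n) - L0) + cnorm ip1 (snd (X n) - L1)"]] le by simp
  then show ?thesis by blast
qed



lemma null_comp:
  fixes f g :: "nat \<Rightarrow> real"
  assumes "\<And>n. 0 \<le> f n" "\<And>n. f n \<le> g n" "g \<longlonglongrightarrow> 0"
  shows "f \<longlonglongrightarrow> 0"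
  using Lim_null_comparison[OF always_eventually[of "\<lambda>n. norm (f n) \<le> g n"] assms(3)] assms(1,2)
  by simp

lemma hilbert_module:
  assumes "complex_hilbert_space sc ip" shows "module sc"
proof -
  have c: "complex_inner_space sc ip" using conjunct1[OF assms[unfolded complex_hilbert_space_def]] .
  have "vector_space sc" using conjunct1[OF c[unfolded complex_inner_space_def]] .
  then show ?thesis by (simp add: module_iff_vector_space)
qed

lemma graph_limit:
  fixes T :: "'a::ab_group_add \<Rightarrow> 'b::ab_group_add"
  assumes H0: "complex_hilbert_space sc0 ip0" and H1: "complex_hilbert_space sc1 ip1"
    and cl: "closed_op ip0 ip1 dm T"
    and u: "\<forall>n. u n \<in> dm"
    and X: "\<forall>e>0. \<exists>M. \<forall>m\<ge>M. \<forall>n\<ge>M. cnorm (pip ip0 ip1) ((u m, T (u m)) - (u n, T (u n))) < e"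
  shows "\<exists>x\<in>dm. (\<lambda>n. cnorm (pip ip0 ip1) ((u n, T (u n)) - (x, T x))) \<longlonglongrightarrow> 0"
proof -
  have c0: "cips sc0 ip0" and c1: "cips sc1 ip1" using H0 H1 by (auto intro: hilbert_cips)
  obtain L where L: "(\<lambda>n. cnorm (pip ip0 ip1) ((u n, T (u n)) - L)) \<longlonglongrightarrow> 0"
    using prod_complete[OF H0 H1 X] by blast
  have l0: "(\<lambda>n. cnorm ip0 (u n - fst L)) \<longlonglongrightarrow> 0"
  proof (rule null_comp[OF _ _ L])
    fix n
    show "0 \<le> cnorm ip0 (u n - fst L)" by (rule cips.cnorm_nonneg[OF c0])
    show "cnorm ip0 (u n - fst L) \<le> cnorm (pip ip0 ip1) ((u n, T (u n)) - L)"
      using pnorm_fst[OF c1, where p = "(u n, T (u n)) - L"] by simp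
  qed
  have l1: "(\<lambda>n. cnorm ip1 (T (u n) - snd L)) \<longlonglongrightarrow> 0"
  proof (rule null_comp[OF _ _ L])
    fix n
    show "0 \<le> cnorm ip1 (T (u n) - snd L)" by (rule cips.cnorm_nonneg[OF c1])
    show "cnorm ip1 (T (u n) - snd L) \<le> cnorm (pip ip0 ip1) ((u n, T (u n)) - L)"
      using pnorm_snd[OF c0, where p = "(u n, T (u n)) - L"] by simp
  qed
  have st: "fst L \<in> dm \<and> T (fst L) = snd L"
    using cl u l0 l1 unfolding closed_op_def by blast
  then have e: "(fst L, T (fst L)) = L" by (simp add: prod_eq_iff)
  show ?thesis
    apply (rule bexI[where x="fst L"])
     apply (unfold e)
    using L st by auto
qed

lemma dense_unique:
  assumes c: "cips sc ip" and dn: "\<forall>x. \<forall>e>0. \<exists>y\<in>dm. cnorm ip (x - y) < e"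
    and h: "\<forall>u\<in>dm. ip u a = ip u b"
  shows "a = b"
proof -
  interpret cips sc ip by fact
  define c where "c = a - b"
  have o: "ip u c = 0" if "u \<in> dm" for u using h that unfolding c_def by (simp add: diff_right)
  have "cnorm ip c = 0"
  proof (rule ccontr)
    assume ne: "cnorm ip c \<noteq> 0"
    then have pos: "cnorm ip c > 0" using cnorm_nonneg[of c] by linarith
    then obtain y where y: "y \<in> dm" "cnorm ip (c - y) < cnorm ip c" using dn by blast
    have "ip c c = ip (c - y) c" using o[OF y(1)] by (simp add: diff_left)
    then have "Q c = Re (ip (c - y) c)" unfolding Q_def by simp
    also have "... \<le> cnorm ip (c - y) * cnorm ip c" by (rule Re_le_cmod_ip)
    also have "... < cnorm ip c * cnorm ip c" using y(2) pos by simp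
    finally show False by (simp add: Q_sq power2_eq_square)
  qed
  then have "c = 0" using Q_eq0 by (simp add: cnorm_Q)
  then show ?thesis unfolding c_def by simp
qed

lemma double_adj:
  fixes T :: "'a::ab_group_add \<Rightarrow> 'b::ab_group_add"
  assumes H0: "complex_hilbert_space sc0 ip0" and H1: "complex_hilbert_space sc1 ip1"
    and dd: "densely_defined_op sc0 ip0 sc1 dm T"
    and cl: "closed_op ip0 ip1 dm T"
    and hyp: "\<forall>r r'. (\<forall>u\<in>dm. ip1 (T u) r = ip0 u r') \<longrightarrow> ip0 r' v = ip1 r z"
  shows "v \<in> dm \<and> T v = z"
proof -
  have c0: "cips sc0 ip0" and c1: "cips sc1 ip1" using H0 H1 by (auto intro: hilbert_cips)
  interpret A: cips sc0 ip0 by fact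
  interpret B: cips sc1 ip1 by fact
  interpret P: cips "psc sc0 sc1" "pip ip0 ip1" by (rule prod_cips[OF c0 c1])
  have sub: "0 \<in> dm" "\<And>x y. x \<in> dm \<Longrightarrow> y \<in> dm \<Longrightarrow> x + y \<in> dm" "\<And>c x. x \<in> dm \<Longrightarrow> sc0 c x \<in> dm"
    using dd[unfolded densely_defined_op_def module.subspace_def[OF hilbert_module[OF H0]]] by blast+
  have Tadd: "\<And>x y. x \<in> dm \<Longrightarrow> y \<in> dm \<Longrightarrow> T (x + y) = T x + T y"
    and Tsc: "\<And>c x. x \<in> dm \<Longrightarrow> T (sc0 c x) = sc1 c (T x)"
    using dd[unfolded densely_defined_op_def] by blast+
  define N where "N = (\<lambda>u. (u, T u)) ` dm"
  have subN: "P.csub N" unfolding P.csub_def N_def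
  proof (intro conjI ballI allI)
    show "(\<lambda>u. (u, T u)) ` dm \<noteq> {}" using sub(1) by blast
  next
    fix a b assume "a \<in> (\<lambda>u. (u, T u)) ` dm" "b \<in> (\<lambda>u. (u, T u)) ` dm"
    then obtain x y where "x \<in> dm" "y \<in> dm" "a = (x, T x)" "b = (y, T y)" by blast
    then show "a + b \<in> (\<lambda>u. (u, T u)) ` dm" using sub(2) Tadd
      by (intro image_eqI[of _ _ "x + y"]) auto
  next
    fix c a assume "a \<in> (\<lambda>u. (u, T u)) ` dm"
    then obtain x where "x \<in> dm" "a = (x, T x)" by blast
    then show "psc sc0 sc1 c a \<in> (\<lambda>u. (u, T u)) ` dm" using sub(3) Tsc
      by (intro image_eqI[of _ _ "sc0 c x"]) (auto simp: psc_def)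
  qed
  have cmN: "P.cmpl N" unfolding P.cmpl_def
  proof (intro allI impI)
    fix X :: "nat \<Rightarrow> 'a \<times> 'b"
    assume H: "(\<forall>n. X n \<in> N) \<and> (\<forall>e>0. \<exists>M. \<forall>m\<ge>M. \<forall>n\<ge>M. cnorm (pip ip0 ip1) (X m - X n) < e)"
    define u where "u n = fst (X n)" for n
    have Xu: "X n = (u n, T (u n)) \<and> u n \<in> dm" for n
    proof -
      from H have "X n \<in> N" by blast
      then obtain y where "y \<in> dm" "X n = (y, T y)" unfolding N_def by blast
      then show ?thesis unfolding u_def by simp
    qed
    then have Xu: "X n = (u n, T (u n))" and udm: "u n \<in> dm" for n by auto
    have "\<exists>x\<in>dm. (\<lambda>n. cnorm (pip ip0 ip1) ((u n, T (u n)) - (x, T x))) \<longlonglongrightarrow> 0"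
      using H by (intro graph_limit[OF H0 H1 cl]) (auto simp: udm Xu[symmetric])
    then show "\<exists>L\<in>N. (\<lambda>n. cnorm (pip ip0 ip1) (X n - L)) \<longlonglongrightarrow> 0"
      unfolding N_def Xu[symmetric] by blast
  qed
  obtain m where m: "m \<in> N" "\<forall>n\<in>N. pip ip0 ip1 n ((v, z) - m) = 0"
    using P.projection[OF subN cmN] by blast
  obtain u where u: "u \<in> dm" "m = (u, T u)" using m(1) unfolding N_def by blast
  define p where "p = v - u"
  define r where "r = z - T u"
  have orth: "ip0 u' p + ip1 (T u') r = 0" if "u' \<in> dm" for u'
    using m(2) that u unfolding N_def p_def r_def pip_def by auto
  have "ip1 (T u') r = ip0 u' (- p)" if "u' \<in> dm" for u'
    using orth[OF that] by (simp add: A.minus_right add_eq_0_iff)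
  then have h1: "ip0 (- p) v = ip1 r z" using hyp by blast
  have h2: "ip0 p v + ip1 r z = 0"
  proof -
    have "ip1 r z = - ip0 p v" using h1 A.minus_left[of p v] by simp
    then show ?thesis by simp
  qed
  have h3: "ip0 p u + ip1 r (T u) = 0"
  proof -
    have "cnj (ip0 u p + ip1 (T u) r) = 0" using orth[OF u(1)] by simp
    then show ?thesis by (simp add: A.herm[of u p] B.herm[of "T u" r])
  qed
  have "ip0 p p + ip1 r r = (ip0 p v + ip1 r z) - (ip0 p u + ip1 r (T u))"
    unfolding p_def r_def by (simp add: A.diff_right B.diff_right algebra_simps)
  also have "... = 0" using h2 h3 by simp
  finally have "pip ip0 ip1 (p, r) (p, r) = 0" unfolding pip_def by simp
  then have "(p, r) = 0" by (rule P.pdef)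
  then show ?thesis using u(1) unfolding p_def r_def by (simp add: zero_prod_def)
qed



theorem proposition2p8:
  fixes sc0 :: "complex \<Rightarrow> 'a::ab_group_add \<Rightarrow> 'a" and ip0 :: "'a \<Rightarrow> 'a \<Rightarrow> complex"
    and sc1 :: "complex \<Rightarrow> 'b::ab_group_add \<Rightarrow> 'b" and ip1 :: "'b \<Rightarrow> 'b \<Rightarrow> complex"
    and domG :: "'a set" and G :: "'a \<Rightarrow> 'b"
    and domD :: "'b set" and D :: "'b \<Rightarrow> 'a"
  assumes H0: "complex_hilbert_space sc0 ip0"
    and H1: "complex_hilbert_space sc1 ip1"
    and G_dd: "densely_defined_op sc0 ip0 sc1 domG G"
    and G_closed: "closed_op ip0 ip1 domG G"
    and D_dd: "densely_defined_op sc1 ip1 sc0 domD D"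
    and D_closed: "closed_op ip1 ip0 domD D"
    and ext: "\<forall>v \<in> adj_dom ip0 ip1 domG G. v \<in> domD \<and> D v = - adj ip0 ip1 domG G v"
  shows
    "let BG = BD ip0 ip1 domG G (adj_dom ip1 ip0 domD D);
         BDD = BD ip1 ip0 domD D (adj_dom ip0 ip1 domG G);
         NG = graph_norm ip0 ip1 G;
         ND = graph_norm ip1 ip0 D;
         \<Phi> = (\<lambda>q u. ip0 (D q) u + ip1 q (G u))
     in (\<forall>q\<in>BDD. \<Phi> q \<in> antidual BG sc0 NG) \<and>
        (\<forall>q\<in>BDD. \<forall>q'\<in>BDD. \<forall>u\<in>BG. \<Phi> (q + q') u = \<Phi> q u + \<Phi> q' u) \<and>
        (\<forall>a. \<forall>q\<in>BDD. \<forall>u\<in>BG. \<Phi> (sc1 a q) u = a * \<Phi> q u) \<and>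
        (\<forall>q\<in>BDD. dual_norm BG NG (\<Phi> q) = ND q) \<and>
        (\<forall>f\<in>antidual BG sc0 NG. \<exists>q\<in>BDD. \<forall>u\<in>BG. \<Phi> q u = f u)"
proof -
  have c0: "cips sc0 ip0" and c1: "cips sc1 ip1" using H0 H1 by (auto intro: hilbert_cips)
  interpret A: cips sc0 ip0 by fact
  interpret B: cips sc1 ip1 by fact
  interpret P: cips "psc sc0 sc1" "pip ip0 ip1" by (rule prod_cips[OF c0 c1])
  have subG: "0 \<in> domG" "\<And>x y. x \<in> domG \<Longrightarrow> y \<in> domG \<Longrightarrow> x + y \<in> domG"
      "\<And>c x. x \<in> domG \<Longrightarrow> sc0 c x \<in> domG"
    using G_dd[unfolded densely_defined_op_def module.subspace_def[OF hilbert_module[OF H0]]] by blast+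
  have Gadd: "\<And>x y. x \<in> domG \<Longrightarrow> y \<in> domG \<Longrightarrow> G (x + y) = G x + G y"
    and Gsc: "\<And>c x. x \<in> domG \<Longrightarrow> G (sc0 c x) = sc1 c (G x)"
    and densG: "\<forall>x. \<forall>e>0. \<exists>y\<in>domG. cnorm ip0 (x - y) < e"
    using G_dd[unfolded densely_defined_op_def] by blast+
  have subD: "0 \<in> domD" "\<And>x y. x \<in> domD \<Longrightarrow> y \<in> domD \<Longrightarrow> x + y \<in> domD"
      "\<And>c x. x \<in> domD \<Longrightarrow> sc1 c x \<in> domD"
    using D_dd[unfolded densely_defined_op_def module.subspace_def[OF hilbert_module[OF H1]]] by blast+
  have Dadd: "\<And>x y. x \<in> domD \<Longrightarrow> y \<in> domD \<Longrightarrow> D (x + y) = D x + D y"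
    and Dsc: "\<And>c x. x \<in> domD \<Longrightarrow> D (sc1 c x) = sc0 c (D x)"
    using D_dd[unfolded densely_defined_op_def] by blast+
  have G0: "G 0 = 0" using Gadd[OF subG(1) subG(1)] by simp
  define AG where "AG = adj_dom ip0 ip1 domG G"
  define AD where "AD = adj_dom ip1 ip0 domD D"
  define BG where "BG = BD ip0 ip1 domG G AD"
  define BDD where "BDD = BD ip1 ip0 domD D AG"
  define NG where "NG = graph_norm ip0 ip1 G"
  define ND where "ND = graph_norm ip1 ip0 D"
  define Phi where "Phi = (\<lambda>q u. ip0 (D q) u + ip1 q (G u))"

  have AGw: "r \<in> domD \<and> D r = - r'" if h: "\<forall>u\<in>domG. ip1 (G u) r = ip0 u r'" for r r'
  proof -
    have rA: "r \<in> adj_dom ip0 ip1 domG G" unfolding adj_dom_def using h by blast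
    have "adj ip0 ip1 domG G r = r'" unfolding adj_def
    proof (rule the_equality)
      show "\<forall>u\<in>domG. ip1 (G u) r = ip0 u r'" by (rule h)
      fix w assume "\<forall>u\<in>domG. ip1 (G u) r = ip0 u w"
      then have "\<forall>u\<in>domG. ip0 u w = ip0 u r'" using h by simp
      then show "w = r'" by (rule dense_unique[OF c0 densG])
    qed
    then show ?thesis using ext rA by simp
  qed

  have DA: "v \<in> domG \<and> G v = - w" if h: "\<forall>u\<in>domD. ip0 (D u) v = ip1 u w" for v w
  proof (rule double_adj[OF H0 H1 G_dd G_closed], intro allI impI)
    fix r r' assume h2: "\<forall>u\<in>domG. ip1 (G u) r = ip0 u r'"
    from AGw[OF h2] have r: "r \<in> domD" "D r = - r'" by auto
    have "ip0 (D r) v = ip1 r w" using h r(1) by blast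
    then have "- ip0 r' v = ip1 r w" using r(2) A.minus_left by simp
    then show "ip0 r' v = ip1 r (- w)" by (simp add: B.minus_right) (metis minus_minus)
  qed

  have BGsub: "BG \<subseteq> domG" unfolding BG_def BD_def by auto
  have BGorth: "ip0 u v + ip1 (G u) (G v) = 0" if "u \<in> BG" "v \<in> AD" for u v
    using that unfolding BG_def BD_def by blast
  have BGI: "u \<in> BG" if "u \<in> domG" "\<And>v. v \<in> AD \<Longrightarrow> ip0 u v + ip1 (G u) (G v) = 0" for u
    using that unfolding BG_def BD_def by blast
  have BG0: "0 \<in> BG" by (rule BGI) (simp_all add: subG(1) G0)
  have BGadd: "u + u' \<in> BG" if "u \<in> BG" "u' \<in> BG" for u u'
  proof (rule BGI)
    show "u + u' \<in> domG" using that BGsub subG(2) by blast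
    fix v assume v: "v \<in> AD"
    have "ip0 (u + u') v + ip1 (G (u + u')) (G v) = (ip0 u v + ip1 (G u) (G v)) + (ip0 u' v + ip1 (G u') (G v))"
      using that BGsub by (simp add: Gadd[OF subsetD[OF BGsub that(1)] subsetD[OF BGsub that(2)]] A.add_left B.add_left)
    also have "... = 0" using BGorth[OF that(1) v] BGorth[OF that(2) v] by simp
    finally show "ip0 (u + u') v + ip1 (G (u + u')) (G v) = 0" .
  qed
  have BGsc: "sc0 c u \<in> BG" if "u \<in> BG" for c u
  proof (rule BGI)
    show "sc0 c u \<in> domG" using that BGsub subG(3) by blast
    fix v assume v: "v \<in> AD"
    have "ip0 (sc0 c u) v + ip1 (G (sc0 c u)) (G v) = c * (ip0 u v + ip1 (G u) (G v))"
      using that BGsub by (simp add: Gsc[OF subsetD[OF BGsub that]] A.sc_left B.sc_left distrib_left)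
    also have "... = 0" using BGorth[OF that v] by simp
    finally show "ip0 (sc0 c u) v + ip1 (G (sc0 c u)) (G v) = 0" .
  qed
  have BDDsub: "BDD \<subseteq> domD" unfolding BDD_def BD_def by auto
  have BDDorth: "ip1 q v + ip0 (D q) (D v) = 0" if "q \<in> BDD" "v \<in> AG" for q v
    using that unfolding BDD_def BD_def by blast

  have Phi_pip: "Phi q u = pip ip0 ip1 (D q, q) (u, G u)" for q u by (simp add: Phi_def pip_def)
  have NG_eq: "NG u = cnorm (pip ip0 ip1) (u, G u)" for u
    by (simp add: NG_def graph_norm_def cnorm_def pip_def)
  have ND_eq: "ND q = cnorm (pip ip0 ip1) (D q, q)" for q
    by (simp add: ND_def graph_norm_def cnorm_def pip_def add.commute)
  have bound: "cmod (Phi q u) \<le> ND q * NG u" for q u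
    unfolding Phi_pip NG_eq ND_eq by (rule P.CS)
  have ND_nonneg: "0 \<le> ND q" for q unfolding ND_eq by (rule P.cnorm_nonneg)

  have part1: "\<forall>q\<in>BDD. Phi q \<in> antidual BG sc0 NG"
  proof
    fix q assume q: "q \<in> BDD"
    show "Phi q \<in> antidual BG sc0 NG" unfolding antidual_def
    proof (intro CollectI conjI ballI allI)
      fix u v assume uv: "u \<in> BG" "v \<in> BG"
      then show "Phi q (u + v) = Phi q u + Phi q v"
        by (simp add: Phi_def Gadd[OF subsetD[OF BGsub uv(1)] subsetD[OF BGsub uv(2)]] A.add_right B.add_right)
    next
      fix a u assume u: "u \<in> BG"
      then show "Phi q (sc0 a u) = cnj a * Phi q u"
        by (simp add: Phi_def Gsc[OF subsetD[OF BGsub u]] A.sc_right B.sc_right distrib_left)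
    next
      show "\<exists>C. \<forall>u\<in>BG. cmod (Phi q u) \<le> C * NG u" using bound by blast
    qed
  qed
  have part2: "\<forall>q\<in>BDD. \<forall>q'\<in>BDD. \<forall>u\<in>BG. Phi (q + q') u = Phi q u + Phi q' u"
  proof (intro ballI)
    fix q q' u assume qq: "q \<in> BDD" "q' \<in> BDD"
    show "Phi (q + q') u = Phi q u + Phi q' u"
      by (simp add: Phi_def Dadd[OF subsetD[OF BDDsub qq(1)] subsetD[OF BDDsub qq(2)]] A.add_left B.add_left)
  qed
  have part3: "\<forall>a. \<forall>q\<in>BDD. \<forall>u\<in>BG. Phi (sc1 a q) u = a * Phi q u"
  proof (intro allI ballI)
    fix a q u assume q: "q \<in> BDD"
    show "Phi (sc1 a q) u = a * Phi q u"
      by (simp add: Phi_def Dsc[OF subsetD[OF BDDsub q]] A.sc_left B.sc_left distrib_left)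
  qed

  have part4: "\<forall>q\<in>BDD. dual_norm BG NG (Phi q) = ND q"
  proof
    fix q assume q: "q \<in> BDD"
    have qD: "q \<in> domD" using q BDDsub by blast
    have Dq: "D q \<in> domG \<and> G (D q) = q"
    proof (rule double_adj[OF H0 H1 G_dd G_closed], intro allI impI)
      fix r r' assume h: "\<forall>u\<in>domG. ip1 (G u) r = ip0 u r'"
      from AGw[OF h] have r: "r \<in> domD" "D r = - r'" by auto
      have rA: "r \<in> AG" unfolding AG_def adj_dom_def using h by blast
      have "ip1 q r + ip0 (D q) (- r') = 0" using BDDorth[OF q rA] r(2) by simp
      then have "ip1 q r = ip0 (D q) r'" by (simp add: A.minus_right)
      then have "cnj (ip1 q r) = cnj (ip0 (D q) r')" by simp
      then show "ip0 r' (D q) = ip1 r q" by (simp add: A.herm[of "D q" r'] B.herm[of q r])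
    qed
    have DqBG: "D q \<in> BG"
    proof (rule BGI)
      show "D q \<in> domG" using Dq by blast
      fix v assume v: "v \<in> AD"
      then obtain w where w: "\<forall>u\<in>domD. ip0 (D u) v = ip1 u w" unfolding AD_def adj_dom_def by blast
      have Gv: "G v = - w" using DA[OF w] by blast
      have "ip0 (D q) v = ip1 q w" using w qD by blast
      then show "ip0 (D q) v + ip1 (G (D q)) (G v) = 0" using Dq Gv by (simp add: B.minus_right)
    qed
    define n where "n = ND q"
    have n0: "0 \<le> n" unfolding n_def by (rule ND_nonneg)
    define S where "S = {cmod (Phi q u) | u. u \<in> BG \<and> NG u \<le> 1}"
    have upper: "x \<le> n" if xS: "x \<in> S" for x
    proof -
      obtain u where u: "x = cmod (Phi q u)" "NG u \<le> 1" using xS unfolding S_def by blast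
      have "x \<le> n * NG u" using bound u(1) unfolding n_def by simp
      also have "... \<le> n * 1" by (rule mult_left_mono[OF u(2) n0])
      finally show ?thesis by simp
    qed
    have attain: "n \<in> S"
    proof (cases "n = 0")
      case True
      have "NG 0 = 0" unfolding NG_eq G0 by (simp add: cnorm_def pip_def)
      moreover have "Phi q 0 = 0" by (simp add: Phi_def G0)
      ultimately show ?thesis unfolding S_def using BG0 True by force
    next
      case False
      then have npos: "n > 0" using n0 by simp
      define c where "c = complex_of_real (1 / n)"
      define y where "y = (D q, q)"
      define u where "u = sc0 c (D q)"
      have uBG: "u \<in> BG" unfolding u_def by (rule BGsc[OF DqBG])
      have uy: "(u, G u) = psc sc0 sc1 c y"
        unfolding u_def y_def psc_def using Dq by (simp add: Gsc)
      have ny: "cnorm (pip ip0 ip1) y = n" unfolding y_def n_def ND_eq ..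
      have "NG u = cmod c * n" unfolding NG_eq uy P.cnorm_sc ny ..
      also have "... = 1" unfolding c_def using npos by (simp add: norm_divide)
      finally have NGu: "NG u = 1" .
      have "Phi q u = pip ip0 ip1 y (psc sc0 sc1 c y)" unfolding Phi_pip uy y_def ..
      also have "... = cnj c * pip ip0 ip1 y y" by (rule P.sc_right)
      also have "pip ip0 ip1 y y = complex_of_real (n^2)"
        unfolding P.ip_self P.Q_sq ny ..
      also have "cnj c * complex_of_real (n^2) = complex_of_real n"
        unfolding c_def using npos by (simp add: power2_eq_square)
      finally have "cmod (Phi q u) = n" using n0 by simp
      then show ?thesis unfolding S_def using uBG NGu by force
    qed
    have "dual_norm BG NG (Phi q) = Sup S" unfolding dual_norm_def S_def ..
    also have "... = n" by (rule cSup_eq_maximum[OF attain upper])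
    finally show "dual_norm BG NG (Phi q) = ND q" unfolding n_def .
  qed

  have part5: "\<forall>f\<in>antidual BG sc0 NG. \<exists>q\<in>BDD. \<forall>u\<in>BG. Phi q u = f u"
  proof
    fix f assume f: "f \<in> antidual BG sc0 NG"
    have fadd: "\<forall>u\<in>BG. \<forall>v\<in>BG. f (u + v) = f u + f v"
      and fsc: "\<forall>a. \<forall>u\<in>BG. f (sc0 a u) = cnj a * f u"
      using f unfolding antidual_def by blast+
    obtain C where fb: "\<forall>u\<in>BG. cmod (f u) \<le> C * NG u" using f unfolding antidual_def by blast
    define M where "M = (\<lambda>u. (u, G u)) ` BG"
    have subM: "P.csub M" unfolding P.csub_def M_def
    proof (intro conjI ballI allI)
      show "(\<lambda>u. (u, G u)) ` BG \<noteq> {}" using BG0 by blast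
    next
      fix a b assume "a \<in> (\<lambda>u. (u, G u)) ` BG" "b \<in> (\<lambda>u. (u, G u)) ` BG"
      then obtain x y where "x \<in> BG" "y \<in> BG" "a = (x, G x)" "b = (y, G y)" by blast
      then show "a + b \<in> (\<lambda>u. (u, G u)) ` BG" using BGadd Gadd[OF subsetD[OF BGsub \<open>x \<in> BG\<close>] subsetD[OF BGsub \<open>y \<in> BG\<close>]]
        by (intro image_eqI[of _ _ "x + y"]) auto
    next
      fix c a assume "a \<in> (\<lambda>u. (u, G u)) ` BG"
      then obtain x where "x \<in> BG" "a = (x, G x)" by blast
      then show "psc sc0 sc1 c a \<in> (\<lambda>u. (u, G u)) ` BG" using BGsc Gsc[OF subsetD[OF BGsub \<open>x \<in> BG\<close>]]
        by (intro image_eqI[of _ _ "sc0 c x"]) (auto simp: psc_def)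
    qed
    have cmM: "P.cmpl M" unfolding P.cmpl_def
    proof (intro allI impI)
      fix X :: "nat \<Rightarrow> 'a \<times> 'b"
      assume H: "(\<forall>n. X n \<in> M) \<and> (\<forall>e>0. \<exists>M. \<forall>m\<ge>M. \<forall>n\<ge>M. cnorm (pip ip0 ip1) (X m - X n) < e)"
      define u where "u n = fst (X n)" for n
      have Xu: "X n = (u n, G (u n)) \<and> u n \<in> BG" for n
      proof -
        from H have "X n \<in> M" by blast
        then obtain y where "y \<in> BG" "X n = (y, G y)" unfolding M_def by blast
        then show ?thesis unfolding u_def by simp
      qed
      then have Xu: "X n = (u n, G (u n))" and uBG: "u n \<in> BG" for n by auto
      have "\<exists>x\<in>domG. (\<lambda>n. cnorm (pip ip0 ip1) ((u n, G (u n)) - (x, G x))) \<longlonglongrightarrow> 0"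
        using H uBG BGsub by (intro graph_limit[OF H0 H1 G_closed]) (auto simp: Xu[symmetric])
      then obtain x where x: "x \<in> domG" "(\<lambda>n. cnorm (pip ip0 ip1) (X n - (x, G x))) \<longlonglongrightarrow> 0"
        unfolding Xu[symmetric] by blast
      have "x \<in> BG"
      proof (rule BGI[OF x(1)])
        fix v assume v: "v \<in> AD"
        have "(\<lambda>n. pip ip0 ip1 (X n) (v, G v)) \<longlonglongrightarrow> pip ip0 ip1 (x, G x) (v, G v)"
          by (rule P.ip_cont[OF x(2)])
        moreover have "pip ip0 ip1 (X n) (v, G v) = 0" for n
          using BGorth[OF uBG v] unfolding Xu pip_def by simp
        ultimately have "(\<lambda>n. 0::complex) \<longlonglongrightarrow> pip ip0 ip1 (x, G x) (v, G v)" by simp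
        then have "pip ip0 ip1 (x, G x) (v, G v) = 0" using LIMSEQ_unique tendsto_const by blast
        then show "ip0 x v + ip1 (G x) (G v) = 0" unfolding pip_def by simp
      qed
      then show "\<exists>L\<in>M. (\<lambda>n. cnorm (pip ip0 ip1) (X n - L)) \<longlonglongrightarrow> 0"
        using x(2) unfolding M_def by blast
    qed
    have Mfst: "fst p \<in> BG \<and> p = (fst p, G (fst p))" if "p \<in> M" for p
      using that unfolding M_def by auto
    have "\<exists>w\<in>M. \<forall>p\<in>M. f (fst p) = pip ip0 ip1 w p"
    proof (rule P.riesz[OF subM cmM, where C = C])
      show "\<forall>u\<in>M. \<forall>v\<in>M. f (fst (u + v)) = f (fst u) + f (fst v)"
        using fadd Mfst by simp
      show "\<forall>a. \<forall>u\<in>M. f (fst (psc sc0 sc1 a u)) = cnj a * f (fst u)"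
        using fsc Mfst by (simp add: psc_def)
      show "\<forall>u\<in>M. cmod (f (fst u)) \<le> C * cnorm (pip ip0 ip1) u"
      proof
        fix p assume p: "p \<in> M"
        have "cmod (f (fst p)) \<le> C * NG (fst p)" using fb Mfst[OF p] by blast
        also have "NG (fst p) = cnorm (pip ip0 ip1) p" using Mfst[OF p] NG_eq by metis
        finally show "cmod (f (fst p)) \<le> C * cnorm (pip ip0 ip1) p" .
      qed
    qed
    then obtain w where w: "w \<in> BG" "\<forall>p\<in>M. f (fst p) = pip ip0 ip1 (w, G w) p"
      unfolding M_def by blast
    have frep: "f u = ip0 w u + ip1 (G w) (G u)" if "u \<in> BG" for u
      using w(2) that unfolding M_def pip_def by auto
    have wG: "w \<in> domG" using w(1) BGsub by blast
    have qd: "G w \<in> domD \<and> D (G w) = w"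
    proof (rule double_adj[OF H1 H0 D_dd D_closed], intro allI impI)
      fix r r' assume h: "\<forall>u\<in>domD. ip0 (D u) r = ip1 u r'"
      from DA[OF h] have r: "r \<in> domG" "G r = - r'" by auto
      have rA: "r \<in> AD" unfolding AD_def adj_dom_def using h by blast
      have "ip0 w r + ip1 (G w) (- r') = 0" using BGorth[OF w(1) rA] r(2) by simp
      then have "ip0 w r = ip1 (G w) r'" by (simp add: B.minus_right)
      then have "cnj (ip0 w r) = cnj (ip1 (G w) r')" by simp
      then show "ip1 r' (G w) = ip0 r w" by (simp add: A.herm[of w r] B.herm[of "G w" r'])
    qed
    have qB: "G w \<in> BDD" unfolding BDD_def BD_def
    proof (intro CollectI conjI ballI)
      show "G w \<in> domD" using qd by blast
      fix v assume v: "v \<in> AG"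
      then obtain v' where v': "\<forall>u\<in>domG. ip1 (G u) v = ip0 u v'" unfolding AG_def adj_dom_def by blast
      have Dv: "D v = - v'" using AGw[OF v'] by blast
      have "ip1 (G w) v = ip0 w v'" using v' wG by blast
      then show "ip1 (G w) v + ip0 (D (G w)) (D v) = 0" using qd Dv by (simp add: A.minus_right)
    qed
    have "\<forall>u\<in>BG. Phi (G w) u = f u"
      using frep qd by (simp add: Phi_def)
    then show "\<exists>q\<in>BDD. \<forall>u\<in>BG. Phi q u = f u" using qB by blast
  qed
  have main: "(\<forall>q\<in>BDD. Phi q \<in> antidual BG sc0 NG) \<and>
        (\<forall>q\<in>BDD. \<forall>q'\<in>BDD. \<forall>u\<in>BG. Phi (q + q') u = Phi q u + Phi q' u) \<and>
        (\<forall>a. \<forall>q\<in>BDD. \<forall>u\<in>BG. Phi (sc1 a q) u = a * Phi q u) \<and>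
        (\<forall>q\<in>BDD. dual_norm BG NG (Phi q) = ND q) \<and>
        (\<forall>f\<in>antidual BG sc0 NG. \<exists>q\<in>BDD. \<forall>u\<in>BG. Phi q u = f u)"
    using part1 part2 part3 part4 part5 by blast
  show ?thesis unfolding Let_def
    using main unfolding BG_def BDD_def NG_def ND_def Phi_def AG_def AD_def .
qed


end
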